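(* For every smooth closed plane curve parametrized by arc length with rotation number $n\ge1$, $4\pi^2 n\,|I_{-1}|\le I_0$.
   Context: A closed plane curve is a smooth map $\vec f:\mathbb{R}/L\mathbb{Z}\to\mathbb{R}^2$ parametrized by arc length $s$, where $L>0$ is its length. $\vec\nu$ is $\partial_s\vec f$ rotated counterclockwise by $\pi/2$, $\kappa=\partial_s^2\vec f\cdot\vec\nu$, $n=\frac1{2\pi}\int_0^L\kappa\,ds$, $A=-\frac12\int_0^L\vec f\cdot\vec\nu\,ds$, $\tilde\kappa=\kappa-\frac1L\int_0^L\kappa\,ds$, $I_0=L\int_0^L\tilde\kappa^2\,ds$, and $I_{-1}=1-\frac{4n\pi A}{L^2}$. *)

theory Defs
  imports "HOL-Analysis.Analysis"
begin

text \<open>A plane curve is given by its two coordinate functions x, y :: real => real,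
  defined on all of R and L-periodic (i.e. a map R/LZ -> R^2).\<close>

definition smooth_fun :: "(real \<Rightarrow> real) \<Rightarrow> bool" where
  "smooth_fun g \<longleftrightarrow> (\<forall>k. (deriv ^^ k) g differentiable_on UNIV)"

definition closed_arclength_curve :: "(real \<Rightarrow> real) \<Rightarrow> (real \<Rightarrow> real) \<Rightarrow> real \<Rightarrow> bool" where
  "closed_arclength_curve x y L \<longleftrightarrow>
     L > 0 \<and> smooth_fun x \<and> smooth_fun y \<and>
     (\<forall>s. x (s + L) = x s \<and> y (s + L) = y s) \<and>
     (\<forall>s. (deriv x s)\<^sup>2 + (deriv y s)\<^sup>2 = 1)"

text \<open>Normal nu = tangent rotated by pi/2 counterclockwise: nu = (-y', x').
  Curvature kappa = f'' . nu.\<close>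
definition curvature :: "(real \<Rightarrow> real) \<Rightarrow> (real \<Rightarrow> real) \<Rightarrow> real \<Rightarrow> real" where
  "curvature x y s = deriv (deriv x) s * (- deriv y s) + deriv (deriv y) s * deriv x s"

definition rotation_number :: "(real \<Rightarrow> real) \<Rightarrow> (real \<Rightarrow> real) \<Rightarrow> real \<Rightarrow> real" where
  "rotation_number x y L = (1 / (2 * pi)) * integral {0..L} (curvature x y)"

definition enclosed_area :: "(real \<Rightarrow> real) \<Rightarrow> (real \<Rightarrow> real) \<Rightarrow> real \<Rightarrow> real" where
  "enclosed_area x y L = - (1/2) * integral {0..L} (\<lambda>s. x s * (- deriv y s) + y s * deriv x s)"

definition osc_curvature :: "(real \<Rightarrow> real) \<Rightarrow> (real \<Rightarrow> real) \<Rightarrow> real \<Rightarrow> real \<Rightarrow> real" where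
  "osc_curvature x y L s = curvature x y s - (1 / L) * integral {0..L} (curvature x y)"

definition I0 :: "(real \<Rightarrow> real) \<Rightarrow> (real \<Rightarrow> real) \<Rightarrow> real \<Rightarrow> real" where
  "I0 x y L = L * integral {0..L} (\<lambda>s. (osc_curvature x y L s)\<^sup>2)"

definition Im1 :: "(real \<Rightarrow> real) \<Rightarrow> (real \<Rightarrow> real) \<Rightarrow> real \<Rightarrow> real" where
  "Im1 x y L = 1 - 4 * rotation_number x y L * pi * enclosed_area x y L / L\<^sup>2"

end

theory Submission
  imports Defs
begin


lemma theta_cos_le_sin:
  fixes t :: real assumes "0 \<le> t" "t \<le> pi/2"
  shows "t * cos t \<le> sin t"
proof -
  have "(\<lambda>x. sin x - x * cos x) 0 \<le> (\<lambda>x. sin x - x * cos x) t"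
  proof (rule DERIV_nonneg_imp_nondecreasing[OF assms(1)])
    fix x assume x: "0 \<le> x" "x \<le> t"
    have "DERIV (\<lambda>x. sin x - x * cos x) x :> cos x - (1 * cos x + x * (- sin x))"
      by (auto intro!: derivative_eq_intros)
    moreover have "cos x - (1 * cos x + x * (- sin x)) \<ge> 0"
      using x assms by (simp add: sin_ge_zero)
    ultimately show "\<exists>y. DERIV (\<lambda>x. sin x - x * cos x) x :> y \<and> 0 \<le> y" by blast
  qed
  then show ?thesis by simp
qed

lemma abs_cot_bound:
  fixes t :: real assumes "0 < t" "t \<le> pi/2"
  shows "\<bar>cot t\<bar> * t \<le> 1"
proof -
  have s: "sin t > 0" using assms by (intro sin_gt_zero) auto
  have c: "cos t \<ge> 0" using assms by (intro cos_ge_zero) auto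
  have "t * cos t \<le> sin t" using theta_cos_le_sin assms by auto
  then show ?thesis using s c by (simp add: cot_def field_simps abs_if)
qed

lemma abs_cot_bound2:
  fixes t :: real assumes "pi/2 \<le> t" "t < pi"
  shows "\<bar>cot t\<bar> * (pi - t) \<le> 1"
proof -
  have "\<bar>cot (pi - t)\<bar> * (pi - t) \<le> 1" using assms by (intro abs_cot_bound) auto
  moreover have "cot (pi - t) = - cot t" by (simp add: cot_def)
  ultimately show ?thesis by simp
qed




lemma bound_on_interval:
  fixes f :: "real \<Rightarrow> real"
  assumes "continuous_on UNIV f"
  obtains M where "M \<ge> 0" "\<And>t. t \<in> {a..b} \<Longrightarrow> \<bar>f t\<bar> \<le> M"
proof (cases "a \<le> b")
  case True
  have "continuous_on {a..b} (\<lambda>t. \<bar>f t\<bar>)"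
    using assms by (intro continuous_intros) (auto intro: continuous_on_subset)
  then obtain x where "x \<in> {a..b}" "\<forall>y\<in>{a..b}. \<bar>f y\<bar> \<le> \<bar>f x\<bar>"
    using continuous_attains_sup[of "{a..b}" "\<lambda>t. \<bar>f t\<bar>"] True by auto
  then show ?thesis using that[of "\<bar>f x\<bar>"] by auto
next
  case False then show ?thesis using that[of 0] by auto
qed

lemma wirtinger_dirichlet:
  fixes u u' :: "real \<Rightarrow> real" and a b :: real
  assumes ab: "a < b"
    and der: "\<And>t. (u has_real_derivative u' t) (at t)"
    and cont: "continuous_on UNIV u'"
    and ua: "u a = 0" and ub: "u b = 0"
  shows "(pi/(b-a))^2 * integral {a..b} (\<lambda>t. (u t)^2) \<le> integral {a..b} (\<lambda>t. (u' t)^2)"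
proof -
  define w where "w = pi/(b-a)"
  have w: "w > 0" using ab by (simp add: w_def)
  define g where "g t = (u' t)^2 - w^2 * (u t)^2" for t
  have contu: "continuous_on UNIV u"
    using der by (meson DERIV_continuous continuous_at_imp_continuous_on)
  have contg: "continuous_on UNIV g"
    unfolding g_def using contu cont by (intro continuous_intros) auto
  have intg: "g integrable_on {s..r}" for s r
    using contg by (intro integrable_continuous_real) (auto intro: continuous_on_subset)
  obtain M where M: "M \<ge> 0" "\<And>t. t \<in> {a..b} \<Longrightarrow> \<bar>g t\<bar> \<le> M"
    using bound_on_interval[OF contg] by blast
  have Mlow: "- M \<le> g t" if "a \<le> t" "t \<le> b" for t using M(2)[of t] that by auto
  obtain K where K: "K \<ge> 0" "\<And>t. t \<in> {a..b} \<Longrightarrow> \<bar>u' t\<bar> \<le> K"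
    using bound_on_interval[OF cont] by blast
  have ula: "\<bar>u s\<bar> \<le> K * (s - a)" if as: "a \<le> s" "s \<le> b" for s
  proof (cases "a = s")
    case True then show ?thesis using ua by simp
  next
    case False
    then obtain z where z: "a < z" "z < s" "u s - u a = (s - a) * u' z"
      using MVT2[of a s u u'] der as by force
    have "\<bar>u' z\<bar> \<le> K" using K z as by auto
    then show ?thesis using z ua as by (simp add: abs_mult mult.commute mult_left_mono)
  qed
  have ulb: "\<bar>u s\<bar> \<le> K * (b - s)" if as: "a \<le> s" "s \<le> b" for s
  proof (cases "b = s")
    case True then show ?thesis using ub by simp
  next
    case False
    then obtain z where z: "s < z" "z < b" "u b - u s = (b - s) * u' z"
      using MVT2[of s b u u'] der as by force
    have "\<bar>u' z\<bar> \<le> K" using K z as by auto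
    moreover have "u s = -((b - s) * u' z)" using z ub by linarith
    then have "\<bar>u s\<bar> = \<bar>u' z\<bar> * (b - s)" using as by (simp add: abs_mult)
    ultimately show ?thesis using as by (simp add: mult_right_mono)
  qed
  define F where "F t = w * ((u t)^2 * cot (w * (t - a)))" for t
  define F' where "F' t = w * (2 * u t * u' t * cot (w * (t - a)) + (u t)^2 * (- inverse ((sin (w * (t - a)))\<^sup>2) * w))" for t
  have sinpos: "sin (w * (t - a)) > 0" if "a < t" "t < b" for t
  proof -
    have "w * (t - a) < w * (b - a)" using that w by simp
    also have "w * (b - a) = pi" using ab by (simp add: w_def)
    finally show ?thesis using that w by (intro sin_gt_zero) auto
  qed
  have derF: "(F has_real_derivative F' t) (at t)" if "a < t" "t < b" for t
  proof -
    have "sin (w * (t - a)) \<noteq> 0" using sinpos that by force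
    then have dc: "((\<lambda>t. cot (w*(t-a))) has_real_derivative (-inverse((sin(w*(t-a)))^2) * w)) (at t)"
      by (intro DERIV_chain2[of cot, OF DERIV_cot]) (auto intro!: derivative_eq_intros)
    have du2: "((\<lambda>t. (u t)^2) has_real_derivative 2 * u t * u' t) (at t)"
      using DERIV_mult[OF der der, of t] by (simp add: power2_eq_square algebra_simps)
    show ?thesis unfolding F_def F'_def
      using DERIV_cmult[OF DERIV_mult[OF du2 dc], of w] by (simp add: algebra_simps)
  qed
  have gF: "F' t \<le> g t" if "a < t" "t < b" for t
  proof -
    have s: "sin (w * (t - a)) > 0" using sinpos that by blast
    have i: "inverse ((sin (w * (t - a)))\<^sup>2) = 1 + (cot (w * (t - a)))^2"
      using s sin_cos_squared_add[of "w * (t - a)"] unfolding cot_def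
      by (simp add: field_simps power2_eq_square)
    have "g t - F' t = (u' t - w * u t * cot (w * (t - a)))^2"
      unfolding g_def F'_def i by (simp add: power2_eq_square algebra_simps)
    then show ?thesis using zero_le_power2[of "u' t - w * u t * cot (w * (t - a))"] by linarith
  qed
  have key: "F r - F s \<le> integral {s..r} g" if sr: "a < s" "s \<le> r" "r < b" for s r
  proof -
    have "(F' has_integral (F r - F s)) {s..r}"
    proof (rule fundamental_theorem_of_calculus[OF sr(2)])
      fix t assume "t \<in> {s..r}"
      then have "(F has_real_derivative F' t) (at t)" using derF sr by auto
      then show "(F has_vector_derivative F' t) (at t within {s..r})"
        by (simp add: has_real_derivative_iff_has_vector_derivative has_vector_derivative_at_within)
    qed
    then have "integral {s..r} F' = F r - F s" "F' integrable_on {s..r}" by blast+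
    moreover have "integral {s..r} F' \<le> integral {s..r} g"
      using calculation(2) intg gF sr by (intro integral_le) auto
    ultimately show ?thesis by simp
  qed
  have Fa: "\<bar>F t\<bar> \<le> K^2 * (t - a)" if t: "a < t" "t \<le> (a+b)/2" for t
  proof -
    have "w * (t - a) \<le> w * ((b - a)/2)" using t w by (intro mult_left_mono) auto
    also have "\<dots> = pi/2" using ab by (simp add: w_def)
    finally have c: "\<bar>cot (w*(t-a))\<bar> * (w*(t-a)) \<le> 1" using t w by (intro abs_cot_bound) auto
    have u: "(u t)^2 \<le> (K * (t - a))^2" proof -
      have "\<bar>u t\<bar> \<le> \<bar>K * (t - a)\<bar>" using ula[of t] t ab K by auto
      then show ?thesis by (simp only: abs_le_square_iff)
    qed
    have "\<bar>F t\<bar> = w * (u t)^2 * \<bar>cot (w*(t-a))\<bar>" unfolding F_def using w by (simp add: abs_mult)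
    also have "\<dots> \<le> w * (K * (t - a))^2 * \<bar>cot (w*(t-a))\<bar>"
      using u w by (intro mult_right_mono mult_left_mono) auto
    also have "\<dots> = K^2 * (t - a) * (\<bar>cot (w*(t-a))\<bar> * (w*(t-a)))" by (simp add: power2_eq_square algebra_simps)
    also have "\<dots> \<le> K^2 * (t - a) * 1" using c t by (intro mult_left_mono) auto
    finally show ?thesis by simp
  qed
  have Fb: "\<bar>F t\<bar> \<le> K^2 * (b - t)" if t: "(a+b)/2 \<le> t" "t < b" for t
  proof -
    have wb: "w * (b - a) = pi" using ab by (simp add: w_def)
    have "w * ((b - a)/2) \<le> w * (t - a)" using t w by (intro mult_left_mono) auto
    moreover have "w * ((b - a)/2) = pi/2" using ab by (simp add: w_def)
    moreover have "w * (t - a) < w * (b - a)" using t w by simp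
    ultimately have c0: "\<bar>cot (w*(t-a))\<bar> * (pi - w*(t-a)) \<le> 1" using wb by (intro abs_cot_bound2) auto
    have pw: "pi - w*(t-a) = w * (b - t)" using wb by (simp add: algebra_simps)
    have c: "\<bar>cot (w*(t-a))\<bar> * (w*(b-t)) \<le> 1" using c0 pw by simp
    have u: "(u t)^2 \<le> (K * (b - t))^2" proof -
      have "\<bar>u t\<bar> \<le> \<bar>K * (b - t)\<bar>" using ulb[of t] t ab K by auto
      then show ?thesis by (simp only: abs_le_square_iff)
    qed
    have "\<bar>F t\<bar> = w * (u t)^2 * \<bar>cot (w*(t-a))\<bar>" unfolding F_def using w by (simp add: abs_mult)
    also have "\<dots> \<le> w * (K * (b - t))^2 * \<bar>cot (w*(t-a))\<bar>"
      using u w by (intro mult_right_mono mult_left_mono) auto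
    also have "\<dots> = K^2 * (b - t) * (\<bar>cot (w*(t-a))\<bar> * (w*(b-t)))" by (simp add: power2_eq_square algebra_simps)
    also have "\<dots> \<le> K^2 * (b - t) * 1" using c t by (intro mult_left_mono) auto
    finally show ?thesis by simp
  qed
  have approx: "integral {a..b} g \<ge> - (2 * M + 2 * K^2) * d" if d: "0 < d" "d < (b - a)/2" for d
  proof -
    define s where "s = a + d"
    define r where "r = b - d"
    have sr: "a < s" "s \<le> r" "r < b" "s \<le> (a+b)/2" "(a+b)/2 \<le> r" using d by (auto simp: s_def r_def)
    have c1: "integral {a..s} g + integral {s..b} g = integral {a..b} g"
      using sr by (intro Henstock_Kurzweil_Integration.integral_combine[OF _ _ intg]) auto
    have c2: "integral {s..r} g + integral {r..b} g = integral {s..b} g"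
      using sr by (intro Henstock_Kurzweil_Integration.integral_combine[OF _ _ intg]) auto
    have l1: "integral {a..s} g \<ge> - M * d"
    proof -
      have "integral {a..s} (\<lambda>_. - M) \<le> integral {a..s} g"
        using sr Mlow by (intro integral_le intg) auto
      then show ?thesis using sr by (simp add: s_def mult.commute)
    qed
    have l3: "integral {r..b} g \<ge> - M * d"
    proof -
      have "integral {r..b} (\<lambda>_. - M) \<le> integral {r..b} g"
        using sr Mlow by (intro integral_le intg) auto
      then show ?thesis using sr by (simp add: r_def mult.commute)
    qed
    have l2: "integral {s..r} g \<ge> - 2 * K^2 * d"
    proof -
      have "\<bar>F s\<bar> \<le> K^2 * d" using Fa[of s] sr by (simp add: s_def)
      moreover have "\<bar>F r\<bar> \<le> K^2 * d" using Fb[of r] sr by (simp add: r_def)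
      ultimately show ?thesis using key[OF sr(1-3)] by linarith
    qed
    show ?thesis using c1 c2 l1 l2 l3 by (simp add: algebra_simps)
  qed
  have gnn: "integral {a..b} g \<ge> 0"
  proof (rule ccontr)
    assume neg: "\<not> ?thesis"
    define C where "C = 2 * M + 2 * K^2 + 1"
    have C: "C > 0" using M K by (simp add: C_def add_nonneg_pos)
    define d where "d = min ((b - a)/4) (- integral {a..b} g / (2 * C))"
    have q: "- integral {a..b} g / (2 * C) > 0" using neg C by (simp add: divide_neg_pos)
    have d1: "d \<le> (b - a)/4" unfolding d_def by (rule min.cobounded1)
    have d2: "d \<le> - integral {a..b} g / (2 * C)" unfolding d_def by (rule min.cobounded2)
    have d0: "0 < d" unfolding d_def using q ab by simp
    have d: "0 < d" "d < (b - a)/2" using d0 d1 ab by linarith+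
    have "integral {a..b} g \<ge> - (2 * M + 2 * K^2) * d" using approx[OF d] .
    moreover have "(2 * M + 2 * K^2) * d \<le> C * d" using d by (simp add: C_def)
    moreover have "C * d \<le> C * (- integral {a..b} g / (2 * C))" using C d2 by (intro mult_left_mono) auto
    moreover have "C * (- integral {a..b} g / (2 * C)) = - integral {a..b} g / 2" using C by simp
    ultimately show False using neg by linarith
  qed
  have int1: "(\<lambda>t. (u' t)^2) integrable_on {a..b}" using cont
    by (intro integrable_continuous_real continuous_intros) (auto intro: continuous_on_subset)
  have int2: "(\<lambda>t. w^2 * (u t)^2) integrable_on {a..b}" using contu
    by (intro integrable_continuous_real continuous_intros) (auto intro: continuous_on_subset)
  have "integral {a..b} g = integral {a..b} (\<lambda>t. (u' t)^2) - w^2 * integral {a..b} (\<lambda>t. (u t)^2)"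
    unfolding g_def by (simp add: integral_diff[OF int1 int2])
  then show ?thesis using gnn by (simp add: w_def)
qed



lemma cint: "continuous_on UNIV (f::real\<Rightarrow>real) \<Longrightarrow> f integrable_on {a..b}"
  by (intro integrable_continuous_real) (auto intro: continuous_on_subset)

lemma periodic_integral:
  fixes F :: "real \<Rightarrow> real"
  assumes cont: "continuous_on UNIV F" and per: "\<And>t. F (t + L) = F t"
    and a: "0 \<le> a" "a \<le> L"
  shows "integral {a..a+L} F = integral {0..L} F"
proof -
  have c1: "integral {a..L} F + integral {L..a+L} F = integral {a..a+L} F"
    using a by (intro Henstock_Kurzweil_Integration.integral_combine cint[OF cont]) auto
  have c2: "integral {0..a} F + integral {a..L} F = integral {0..L} F"
    using a by (intro Henstock_Kurzweil_Integration.integral_combine cint[OF cont]) auto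
  have "F \<circ> (+) L = F" using per by (auto simp: add.commute)
  then have "integral {L..a+L} F = integral {0..a} F"
    using integral_shift_Icc_real[of 0 a F L] by (simp add: add.commute)
  then show ?thesis using c1 c2 by linarith
qed

lemma wirtinger_periodic:
  fixes u u' :: "real \<Rightarrow> real" and L :: real
  assumes L: "L > 0"
    and der: "\<And>t. (u has_real_derivative u' t) (at t)"
    and cont: "continuous_on UNIV u'"
    and peru: "\<And>t. u (t + L) = u t" and peru': "\<And>t. u' (t + L) = u' t"
  shows "\<exists>c. (2*pi/L)^2 * integral {0..L} (\<lambda>t. (u t - c)^2) \<le> integral {0..L} (\<lambda>t. (u' t)^2)"
proof -
  have contu: "continuous_on UNIV u"
    using der by (meson DERIV_continuous continuous_at_imp_continuous_on)
  define q where "q t = u t - u (t + L/2)" for t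
  have contq: "continuous_on {0..L/2} q" unfolding q_def using contu
    by (intro continuous_intros continuous_on_compose2[OF contu]) auto
  have q0: "q (L/2) = - q 0" unfolding q_def using peru[of 0] by simp
  obtain a where a: "0 \<le> a" "a \<le> L/2" "q a = 0"
  proof (cases "q 0 \<le> 0")
    case True
    then show ?thesis using IVT'[of q 0 0 "L/2"] contq q0 L that by auto
  next
    case False
    then show ?thesis using IVT2'[of q "L/2" 0 0] contq q0 L that by auto
  qed
  define c where "c = u a"
  define v where "v t = u t - c" for t
  have derv: "(v has_real_derivative u' t) (at t)" for t
    unfolding v_def using der[of t] by (auto intro!: derivative_eq_intros)
  have va: "v a = 0" "v (a + L/2) = 0" "v (a + L) = 0"
    using a peru[of a] unfolding v_def c_def q_def by auto
  have w: "pi / (a + L/2 - a) = 2*pi/L" "pi / (a + L - (a + L/2)) = 2*pi/L" by auto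
  have W1: "(2*pi/L)^2 * integral {a..a+L/2} (\<lambda>t. (v t)^2) \<le> integral {a..a+L/2} (\<lambda>t. (u' t)^2)"
    using wirtinger_dirichlet[of a "a + L/2" v u', OF _ derv cont va(1,2)] L by (simp only: w)
  have W2: "(2*pi/L)^2 * integral {a+L/2..a+L} (\<lambda>t. (v t)^2) \<le> integral {a+L/2..a+L} (\<lambda>t. (u' t)^2)"
    using wirtinger_dirichlet[of "a + L/2" "a + L" v u', OF _ derv cont va(2,3)] L by (simp only: w)
  have contv2: "continuous_on UNIV (\<lambda>t. (v t)^2)" unfolding v_def using contu by (intro continuous_intros)
  have contu2: "continuous_on UNIV (\<lambda>t. (u' t)^2)" using cont by (intro continuous_intros)
  have s1: "integral {a..a+L/2} (\<lambda>t. (v t)^2) + integral {a+L/2..a+L} (\<lambda>t. (v t)^2) = integral {a..a+L} (\<lambda>t. (v t)^2)"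
    using L by (intro Henstock_Kurzweil_Integration.integral_combine cint[OF contv2]) auto
  have s2: "integral {a..a+L/2} (\<lambda>t. (u' t)^2) + integral {a+L/2..a+L} (\<lambda>t. (u' t)^2) = integral {a..a+L} (\<lambda>t. (u' t)^2)"
    using L by (intro Henstock_Kurzweil_Integration.integral_combine cint[OF contu2]) auto
  have p1: "integral {a..a+L} (\<lambda>t. (v t)^2) = integral {0..L} (\<lambda>t. (v t)^2)"
    using a L by (intro periodic_integral contv2) (auto simp: v_def peru)
  have p2: "integral {a..a+L} (\<lambda>t. (u' t)^2) = integral {0..L} (\<lambda>t. (u' t)^2)"
    using a L by (intro periodic_integral contu2) (auto simp: peru')
  have "(2*pi/L)^2 * integral {0..L} (\<lambda>t. (v t)^2) \<le> integral {0..L} (\<lambda>t. (u' t)^2)"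
  proof -
    have "(2*pi/L)^2 * integral {0..L} (\<lambda>t. (v t)^2) = (2*pi/L)^2 * integral {a..a+L/2} (\<lambda>t. (v t)^2) + (2*pi/L)^2 * integral {a+L/2..a+L} (\<lambda>t. (v t)^2)"
      using s1 p1 by (metis distrib_left)
    then show ?thesis using W1 W2 s2 p2 by linarith
  qed
  then show ?thesis unfolding v_def by blast
qed




lemma cross_pointwise:
  fixes W1 W2 V1 V2 w :: real assumes w: "w > 0"
  shows "\<bar>W1 * V2 - W2 * V1\<bar> \<le> (w * (W1^2 + W2^2) + (V1^2 + V2^2) / w) / 2"
proof -
  have A: "0 \<le> (w*W1 - V2)^2 + (w*W2 + V1)^2" by simp
  have B: "0 \<le> (w*W1 + V2)^2 + (w*W2 - V1)^2" by simp
  have "2 * w * \<bar>W1 * V2 - W2 * V1\<bar> \<le> w^2 * (W1^2 + W2^2) + (V1^2 + V2^2)"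
    using A B w by (simp add: abs_if power2_eq_square algebra_simps)
  moreover have "w * (w * (W1^2 + W2^2) + (V1^2 + V2^2) / w) = w^2 * (W1^2 + W2^2) + (V1^2 + V2^2)"
    using w by (simp add: field_simps power2_eq_square)
  ultimately have "w * (2 * \<bar>W1 * V2 - W2 * V1\<bar>) \<le> w * (w * (W1^2 + W2^2) + (V1^2 + V2^2) / w)"
    by simp
  then show ?thesis using w by (simp add: mult_le_cancel_left_pos)
qed

lemma cross_bound:
  fixes h1 h2 h1' h2' :: "real \<Rightarrow> real" and L :: real
  assumes L: "L > 0"
    and d1: "\<And>t. (h1 has_real_derivative h1' t) (at t)"
    and d2: "\<And>t. (h2 has_real_derivative h2' t) (at t)"
    and c1: "continuous_on UNIV h1'" and c2: "continuous_on UNIV h2'"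
    and p1: "\<And>t. h1 (t + L) = h1 t" and p2: "\<And>t. h2 (t + L) = h2 t"
    and p1': "\<And>t. h1' (t + L) = h1' t" and p2': "\<And>t. h2' (t + L) = h2' t"
  shows "\<bar>integral {0..L} (\<lambda>t. h1 t * h2' t - h2 t * h1' t)\<bar>
          \<le> L / (2*pi) * integral {0..L} (\<lambda>t. (h1' t)^2 + (h2' t)^2)"
proof -
  define w where "w = 2*pi/L"
  have w: "w > 0" using L by (simp add: w_def)
  have ch1: "continuous_on UNIV h1" using d1 by (meson DERIV_continuous continuous_at_imp_continuous_on)
  have ch2: "continuous_on UNIV h2" using d2 by (meson DERIV_continuous continuous_at_imp_continuous_on)
  obtain a1 where a1: "w^2 * integral {0..L} (\<lambda>t. (h1 t - a1)^2) \<le> integral {0..L} (\<lambda>t. (h1' t)^2)"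
    using wirtinger_periodic[OF L d1 c1 p1 p1'] unfolding w_def by blast
  obtain a2 where a2: "w^2 * integral {0..L} (\<lambda>t. (h2 t - a2)^2) \<le> integral {0..L} (\<lambda>t. (h2' t)^2)"
    using wirtinger_periodic[OF L d2 c2 p2 p2'] unfolding w_def by blast
  define X where "X t = (h1 t - a1) * h2' t - (h2 t - a2) * h1' t" for t
  define Y where "Y t = a1 * h2' t - a2 * h1' t" for t
  define B where "B t = (w * ((h1 t - a1)^2 + (h2 t - a2)^2) + ((h1' t)^2 + (h2' t)^2) / w) / 2" for t
  have cX: "continuous_on UNIV X" unfolding X_def using ch1 ch2 c1 c2 by (intro continuous_intros)
  have cY: "continuous_on UNIV Y" unfolding Y_def using ch1 ch2 c1 c2 by (intro continuous_intros)
  have cB: "continuous_on UNIV B" unfolding B_def using ch1 ch2 c1 c2 w by (intro continuous_intros) auto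
  have Y0: "integral {0..L} Y = 0"
  proof -
    have "(Y has_integral ((a1 * h2 L - a2 * h1 L) - (a1 * h2 0 - a2 * h1 0))) {0..L}"
    proof (rule fundamental_theorem_of_calculus)
      show "0 \<le> L" using L by simp
      fix t
      have "((\<lambda>t. a1 * h2 t - a2 * h1 t) has_real_derivative Y t) (at t)"
        unfolding Y_def by (auto intro!: derivative_eq_intros d1 d2)
      then show "((\<lambda>t. a1 * h2 t - a2 * h1 t) has_vector_derivative Y t) (at t within {0..L})"
        by (simp add: has_real_derivative_iff_has_vector_derivative has_vector_derivative_at_within)
    qed
    moreover have "h1 L = h1 0" "h2 L = h2 0" using p1[of 0] p2[of 0] by auto
    ultimately show ?thesis by (simp add: integral_unique)
  qed
  have XY: "integral {0..L} (\<lambda>t. h1 t * h2' t - h2 t * h1' t) = integral {0..L} X + integral {0..L} Y"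
  proof -
    have "(\<lambda>t. h1 t * h2' t - h2 t * h1' t) = (\<lambda>t. X t + Y t)" by (auto simp: X_def Y_def algebra_simps)
    then show ?thesis by (simp add: integral_add cint[OF cX] cint[OF cY])
  qed
  have XB: "\<bar>integral {0..L} X\<bar> \<le> integral {0..L} B"
    using integral_norm_bound_integral[OF cint[OF cX] cint[OF cB], of 0 L] cross_pointwise[OF w]
    unfolding X_def B_def by simp
  define P where "P = integral {0..L} (\<lambda>t. (h1 t - a1)^2) + integral {0..L} (\<lambda>t. (h2 t - a2)^2)"
  define Q where "Q = integral {0..L} (\<lambda>t. (h1' t)^2 + (h2' t)^2)"
  have cP1: "continuous_on UNIV (\<lambda>t. (h1 t - a1)^2)" using ch1 by (intro continuous_intros)
  have cP2: "continuous_on UNIV (\<lambda>t. (h2 t - a2)^2)" using ch2 by (intro continuous_intros)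
  have cQ1: "continuous_on UNIV (\<lambda>t. (h1' t)^2)" using c1 by (intro continuous_intros)
  have cQ2: "continuous_on UNIV (\<lambda>t. (h2' t)^2)" using c2 by (intro continuous_intros)
  have Qs: "Q = integral {0..L} (\<lambda>t. (h1' t)^2) + integral {0..L} (\<lambda>t. (h2' t)^2)"
    unfolding Q_def by (simp add: integral_add cint[OF cQ1] cint[OF cQ2])
  have Bint: "integral {0..L} B = (w * P + Q / w) / 2"
  proof -
    have "integral {0..L} B = integral {0..L} (\<lambda>t. (w/2) * ((h1 t - a1)^2 + (h2 t - a2)^2) + (1/(2*w)) * ((h1' t)^2 + (h2' t)^2))"
      unfolding B_def by (rule arg_cong[where f="integral {0..L}"], rule ext) (use w in \<open>simp add: field_simps\<close>)
    also have "\<dots> = (w/2) * integral {0..L} (\<lambda>t. (h1 t - a1)^2 + (h2 t - a2)^2) + (1/(2*w)) * Q"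
      unfolding Q_def using cP1 cP2 cQ1 cQ2 w
      by (subst integral_add) (auto intro!: cint continuous_intros)
    also have "integral {0..L} (\<lambda>t. (h1 t - a1)^2 + (h2 t - a2)^2) = P"
      unfolding P_def by (simp add: integral_add cint[OF cP1] cint[OF cP2])
    finally show ?thesis using w by (simp add: field_simps)
  qed
  have wP: "w^2 * P \<le> Q" using a1 a2 Qs unfolding P_def by (simp add: distrib_left)
  have "(w * P + Q / w) / 2 \<le> Q / w"
  proof -
    have "w * P = (w^2 * P) / w" using w by (simp add: power2_eq_square)
    also have "\<dots> \<le> Q / w" using wP w by (simp add: divide_right_mono)
    finally have "w * P \<le> Q / w" .
    then have "w * P + Q / w \<le> Q / w + Q / w" by (rule add_right_mono)
    then show ?thesis by simp
  qed
  moreover have "Q / w = L / (2*pi) * Q" by (simp add: w_def)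
  ultimately show ?thesis using XY Y0 XB Bint unfolding Q_def by simp
qed




lemma smooth_derivs:
  assumes "smooth_fun f"
  shows "\<And>t. (f has_real_derivative deriv f t) (at t)"
    "\<And>t. (deriv f has_real_derivative deriv (deriv f) t) (at t)"
    "continuous_on UNIV (deriv (deriv f))"
proof -
  have d0: "f differentiable_on UNIV" using assms unfolding smooth_fun_def by (metis funpow_0)
  have d1: "deriv f differentiable_on UNIV" using assms unfolding smooth_fun_def
    by (metis funpow_0 funpow_Suc_right comp_apply One_nat_def)
  have d2: "deriv (deriv f) differentiable_on UNIV" using assms unfolding smooth_fun_def
    by (metis (no_types) funpow_0 funpow_Suc_right comp_apply Suc_1)
  show "\<And>t. (f has_real_derivative deriv f t) (at t)"
    using d0 by (simp add: DERIV_deriv_iff_real_differentiable differentiable_on_def)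
  show "\<And>t. (deriv f has_real_derivative deriv (deriv f) t) (at t)"
    using d1 by (simp add: DERIV_deriv_iff_real_differentiable differentiable_on_def)
  show "continuous_on UNIV (deriv (deriv f))"
    using d2 by (simp add: differentiable_imp_continuous_on)
qed

lemma deriv_periodic:
  assumes der: "\<And>t. (f has_real_derivative f' t) (at t)" and per: "\<And>t. f (t + L) = f t"
  shows "f' (t + L) = f' t"
proof -
  have "((\<lambda>s. f (s + L)) has_real_derivative f' (t + L) * 1) (at t)"
    by (rule DERIV_chain2[of f, OF der]) (auto intro!: derivative_eq_intros)
  moreover have "(\<lambda>s. f (s + L)) = f" using per by auto
  ultimately have "(f has_real_derivative f' (t + L)) (at t)" by simp
  then show ?thesis using der[of t] by (rule DERIV_unique)
qed

theorem mainTheorem5: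
  fixes x y :: "real \<Rightarrow> real" and L :: real
  assumes "closed_arclength_curve x y L"
    and "rotation_number x y L \<ge> 1"
  shows "4 * pi\<^sup>2 * rotation_number x y L * \<bar>Im1 x y L\<bar> \<le> I0 x y L"
proof -
  have L: "L > 0" and sx: "smooth_fun x" and sy: "smooth_fun y"
    and px: "\<And>s. x (s + L) = x s" and py: "\<And>s. y (s + L) = y s"
    and unit: "\<And>s. (deriv x s)\<^sup>2 + (deriv y s)\<^sup>2 = 1"
    using assms(1) unfolding closed_arclength_curve_def by auto
  define X1 where "X1 = deriv x"
  define X2 where "X2 = deriv (deriv x)"
  define Y1 where "Y1 = deriv y"
  define Y2 where "Y2 = deriv (deriv y)"
  have dx: "\<And>t. (x has_real_derivative X1 t) (at t)"
    and dX1: "\<And>t. (X1 has_real_derivative X2 t) (at t)"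
    and cX2: "continuous_on UNIV X2"
    using smooth_derivs[OF sx] unfolding X1_def X2_def by auto
  have dy: "\<And>t. (y has_real_derivative Y1 t) (at t)"
    and dY1: "\<And>t. (Y1 has_real_derivative Y2 t) (at t)"
    and cY2: "continuous_on UNIV Y2"
    using smooth_derivs[OF sy] unfolding Y1_def Y2_def by auto
  have cx: "continuous_on UNIV x" using dx by (meson DERIV_continuous continuous_at_imp_continuous_on)
  have cy: "continuous_on UNIV y" using dy by (meson DERIV_continuous continuous_at_imp_continuous_on)
  have cX1: "continuous_on UNIV X1" using dX1 by (meson DERIV_continuous continuous_at_imp_continuous_on)
  have cY1: "continuous_on UNIV Y1" using dY1 by (meson DERIV_continuous continuous_at_imp_continuous_on)
  have pX1: "\<And>t. X1 (t + L) = X1 t" using deriv_periodic[OF dx px] .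
  have pY1: "\<And>t. Y1 (t + L) = Y1 t" using deriv_periodic[OF dy py] .
  have pX2: "\<And>t. X2 (t + L) = X2 t" using deriv_periodic[OF dX1 pX1] .
  have pY2: "\<And>t. Y2 (t + L) = Y2 t" using deriv_periodic[OF dY1 pY1] .
  have unit': "(X1 t)^2 + (Y1 t)^2 = 1" for t using unit[of t] by (simp add: X1_def Y1_def)
  have orth: "X1 t * X2 t + Y1 t * Y2 t = 0" for t
  proof -
    have "((\<lambda>t. (X1 t)^2 + (Y1 t)^2) has_real_derivative 2 * X1 t * X2 t + 2 * Y1 t * Y2 t) (at t)"
      using DERIV_add[OF DERIV_mult[OF dX1[of t] dX1[of t]] DERIV_mult[OF dY1[of t] dY1[of t]]]
      by (simp add: power2_eq_square algebra_simps)
    moreover have "(\<lambda>t. (X1 t)^2 + (Y1 t)^2) = (\<lambda>t. 1)" using unit' by auto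
    ultimately have "((\<lambda>t. 1::real) has_real_derivative 2 * X1 t * X2 t + 2 * Y1 t * Y2 t) (at t)" by simp
    then have "2 * X1 t * X2 t + 2 * Y1 t * Y2 t = 0" using DERIV_const[of 1 "at t"] by (rule DERIV_unique)
    then show ?thesis by simp
  qed
  define k where "k t = X2 t * (- Y1 t) + Y2 t * X1 t" for t
  have kdef: "curvature x y = k" by (auto simp: curvature_def k_def X1_def X2_def Y1_def Y2_def)
  have ck: "continuous_on UNIV k" unfolding k_def using cX1 cX2 cY1 cY2 by (intro continuous_intros)
  define w where "w = (1 / L) * integral {0..L} k"
  have intk: "integral {0..L} k = w * L" using L by (simp add: w_def)
  have rot: "rotation_number x y L = w * L / (2 * pi)"
    unfolding rotation_number_def kdef intk by simp
  have wpos: "w > 0"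
  proof -
    have "w * L / (2 * pi) \<ge> 1" using assms(2) rot by simp
    then have "w * L > 0" using pi_gt_zero by (smt (verit) divide_nonpos_pos)
    then show ?thesis using L by (simp add: zero_less_mult_iff)
  qed
  define P where "P t = x t * Y1 t - y t * X1 t" for t
  have cP: "continuous_on UNIV P" unfolding P_def using cx cy cX1 cY1 by (intro continuous_intros)
  define IP where "IP = integral {0..L} P"
  have area: "enclosed_area x y L = IP / 2"
  proof -
    have "(\<lambda>s. x s * (- deriv y s) + y s * deriv x s) = (\<lambda>s. - P s)"
      by (auto simp: P_def X1_def Y1_def)
    then show ?thesis unfolding enclosed_area_def IP_def by (simp add: integral_neg cint[OF cP])
  qed
  define h1 where "h1 t = X1 t + w * y t" for t
  define h2 where "h2 t = Y1 t - w * x t" for t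
  define h1' where "h1' t = X2 t + w * Y1 t" for t
  define h2' where "h2' t = Y2 t - w * X1 t" for t
  have CB: "\<bar>integral {0..L} (\<lambda>t. h1 t * h2' t - h2 t * h1' t)\<bar>
          \<le> L / (2*pi) * integral {0..L} (\<lambda>t. (h1' t)^2 + (h2' t)^2)"
  proof (rule cross_bound[OF L])
    show "(h1 has_real_derivative h1' t) (at t)" for t
      unfolding h1_def h1'_def by (auto intro!: derivative_eq_intros dX1 dy)
    show "(h2 has_real_derivative h2' t) (at t)" for t
      unfolding h2_def h2'_def by (auto intro!: derivative_eq_intros dY1 dx)
    show "continuous_on UNIV h1'" unfolding h1'_def using cX2 cY1 by (intro continuous_intros)
    show "continuous_on UNIV h2'" unfolding h2'_def using cY2 cX1 by (intro continuous_intros)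
  qed (auto simp: h1_def h2_def h1'_def h2'_def pX1 pX2 pY1 pY2 px py)
  have sq: "(h1' t)^2 + (h2' t)^2 = (osc_curvature x y L t)^2" for t
  proof -
    have lag: "(X2 t * Y1 t - Y2 t * X1 t)^2 + (X1 t * X2 t + Y1 t * Y2 t)^2
        = ((X2 t)^2 + (Y2 t)^2) * ((X1 t)^2 + (Y1 t)^2)" by algebra
    have kk0: "(X2 t)^2 + (Y2 t)^2 = (X2 t * Y1 t - Y2 t * X1 t)^2" using lag orth[of t] unit'[of t] by simp
    have "k t = -(X2 t * Y1 t - Y2 t * X1 t)" by (simp add: k_def)
    then have kk: "(X2 t)^2 + (Y2 t)^2 = (k t)^2" using kk0 by (metis power2_minus)
    have osc: "osc_curvature x y L t = k t - w" unfolding osc_curvature_def kdef w_def by simp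
    have "(h1' t)^2 + (h2' t)^2 = (X2 t)^2 + (Y2 t)^2 - 2 * w * k t + w^2 * ((X1 t)^2 + (Y1 t)^2)"
      unfolding h1'_def h2'_def k_def by (simp add: power2_eq_square algebra_simps)
    then show ?thesis unfolding osc kk unit' by (simp add: power2_eq_square algebra_simps)
  qed
  have I0eq: "I0 x y L = L * integral {0..L} (\<lambda>t. (h1' t)^2 + (h2' t)^2)"
    unfolding I0_def sq ..
  have crossint: "integral {0..L} (\<lambda>t. h1 t * h2' t - h2 t * h1' t) = - w * L + w^2 * IP"
  proof -
    have pt: "h1 t * h2' t - h2 t * h1' t = k t + w * (1 + (x t * X2 t + y t * Y2 t)) + (- 2 * w) + w^2 * P t" for t
      using unit'[of t] unfolding h1_def h2_def h1'_def h2'_def k_def P_def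
      by (simp add: power2_eq_square algebra_simps) (metis distrib_left mult.right_neutral)
    have ik: "(k has_integral (w * L)) {0..L}" using integrable_integral[OF cint[OF ck], of 0 L] unfolding intk .
    have iq: "((\<lambda>t. 1 + (x t * X2 t + y t * Y2 t)) has_integral 0) {0..L}"
    proof -
      have "((\<lambda>t. 1 + (x t * X2 t + y t * Y2 t)) has_integral
              ((x L * X1 L + y L * Y1 L) - (x 0 * X1 0 + y 0 * Y1 0))) {0..L}"
      proof (rule fundamental_theorem_of_calculus)
        show "0 \<le> L" using L by simp
        fix t
        have "((\<lambda>t. x t * X1 t + y t * Y1 t) has_real_derivative
                 X1 t * X1 t + x t * X2 t + (Y1 t * Y1 t + y t * Y2 t)) (at t)"
          by (auto intro!: derivative_eq_intros dx dy dX1 dY1)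
        moreover have "X1 t * X1 t + x t * X2 t + (Y1 t * Y1 t + y t * Y2 t) = 1 + (x t * X2 t + y t * Y2 t)"
          using unit'[of t] by (simp add: power2_eq_square)
        ultimately show "((\<lambda>t. x t * X1 t + y t * Y1 t) has_vector_derivative
             1 + (x t * X2 t + y t * Y2 t)) (at t within {0..L})"
          by (simp add: has_real_derivative_iff_has_vector_derivative has_vector_derivative_at_within)
      qed
      moreover have "x L = x 0" "y L = y 0" "X1 L = X1 0" "Y1 L = Y1 0"
        using px[of 0] py[of 0] pX1[of 0] pY1[of 0] by auto
      ultimately show ?thesis by simp
    qed
    have ic: "((\<lambda>t. - 2 * w) has_integral (- 2 * w * L)) {0..L}"
      using has_integral_const_real[of "- 2 * w" 0 L] L by (simp add: mult.commute)
    have ip: "(P has_integral IP) {0..L}" unfolding IP_def using integrable_integral[OF cint[OF cP], of 0 L] .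
    have "((\<lambda>t. k t + w * (1 + (x t * X2 t + y t * Y2 t)) + (- 2 * w) + w^2 * P t) has_integral
            (w * L + w * 0 + (- 2 * w * L) + w^2 * IP)) {0..L}"
      by (intro has_integral_add has_integral_mult_right ik iq ic ip)
    then have "((\<lambda>t. h1 t * h2' t - h2 t * h1' t) has_integral (- w * L + w^2 * IP)) {0..L}"
      unfolding pt by (simp add: algebra_simps)
    then show ?thesis by (rule integral_unique)
  qed
  have im1: "Im1 x y L = 1 - w * IP / L"
    unfolding Im1_def rot area using L by (simp add: field_simps power2_eq_square)
  have cr: "- w * L + w^2 * IP = - (w * L) * Im1 x y L"
    unfolding im1 using L by (simp add: field_simps power2_eq_square)
  have "w * L * \<bar>Im1 x y L\<bar> \<le> L / (2*pi) * integral {0..L} (\<lambda>t. (h1' t)^2 + (h2' t)^2)"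
    using CB unfolding crossint cr using wpos L by (simp add: abs_mult)
  then have "2 * pi * (w * L * \<bar>Im1 x y L\<bar>) \<le> 2 * pi * (L / (2*pi) * integral {0..L} (\<lambda>t. (h1' t)^2 + (h2' t)^2))"
    by (intro mult_left_mono) auto
  then have "2 * pi * (w * L * \<bar>Im1 x y L\<bar>) \<le> I0 x y L" unfolding I0eq by simp
  moreover have "4 * pi\<^sup>2 * rotation_number x y L * \<bar>Im1 x y L\<bar> = 2 * pi * (w * L * \<bar>Im1 x y L\<bar>)"
    unfolding rot by (simp add: power2_eq_square field_simps)
  ultimately show ?thesis by linarith
qed


end
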